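(* Let $M=I\times_{\phi^{p_1}}F_1\times_{\phi^{p_2}}F_2\times_{\phi^{p_3}}F_3$ be a generalized Kasner spacetime with $\dim F_1=\dim F_2=\dim F_3=1$ and $P=\partial/\partial t$. Then the scalar curvature $\overline S$ of $(M,\overline\nabla)$ is constant if and only if one of the following holds: (1) $\zeta=\eta=0$ and $\overline S=3$; (2) $\zeta=0$, $\eta\neq0$, and: $\overline S>3$ is impossible; if $\overline S=3$ then $\phi$ is constant; if $\overline S<3$ then $\phi(t)=c_0e^{\pm\sqrt{-(\overline S-3)/\eta}\,t}$ for a constant $c_0>0$; (3) $\zeta\neq0$, and with $\triangle=\frac94-\frac{(\overline S-3)(\eta+\zeta^2)}{\zeta^2}$ and real constants $c_1,c_2$ making the base positive on $I$: (3a) if $\overline S<\frac{9\zeta^2}{4(\eta+\zeta^2)}+3$: $\phi=\Big(c_1e^{\frac{\frac32+\sqrt\triangle}{2}t}+c_2e^{\frac{\frac32-\sqrt\triangle}{2}t}\Big)^{\frac{2\zeta}{\eta+\zeta^2}}$; (3b) if $\overline S=\frac{9\zeta^2}{4(\eta+\zeta^2)}+3$: $\phi=\big(c_1e^{\frac34t}+c_2te^{\frac34t}\big)^{\frac{2\zeta}{\eta+\zeta^2}}$; (3c) if $\overline S>\frac{9\zeta^2}{4(\eta+\zeta^2)}+3$: $\phi=\Big(c_1e^{\frac34t}\cos\big(\frac{\sqrt{-\triangle}}2t\big)+c_2e^{\frac34t}\sin\big(\frac{\sqrt{-\triangle}}2t\big)\Big)^{\frac{2\zeta}{\eta+\ze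ta^2}}$.
   Context: A generalized Kasner spacetime is $M=I\times F_1\times\cdots\times F_m$, $I=(t_1,t_2)$, Riemannian $(F_i,g_{F_i})$, $l_i=\dim F_i$, metric $g=-dt^2\oplus\phi^{2p_1}g_{F_1}\oplus\cdots\oplus\phi^{2p_m}g_{F_m}$ with $\phi:I\to(0,\infty)$ smooth, $p_i\in\mathbb R$; $\zeta=\sum_il_ip_i$, $\eta=\sum_il_ip_i^2$. $\nabla$ Levi-Civita of $g$, $\pi(X)=g(X,P)$, $\overline\nabla_XY=\nabla_XY+\pi(Y)X$. Curvature $R(X,Y)Z=\nabla_X\nabla_YZ-\nabla_Y\nabla_XZ-\nabla_{[X,Y]}Z$; Ricci $\mathrm{Ric}(X,Y)=\sum_k\varepsilon_kg(R(X,E_k)Y,E_k)$; scalar curvature $S=\sum_k\varepsilon_k\mathrm{Ric}(E_k,E_k)$ over local orthonormal frames, $\varepsilon_k=g(E_k,E_k)$. *)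

theory Defs
  imports "HOL-Analysis.Analysis"
begin

text \<open>Generalized Kasner spacetime with three one-dimensional fibres, written in
  local coordinates (x0 = t, x1, x2, x3); each 1-dimensional Riemannian fibre is
  locally isometric to an interval of the real line, so locally
  g = -dt^2 + phi^(2 p1) dx1^2 + phi^(2 p2) dx2^2 + phi^(2 p3) dx3^2.
  All metric components depend on t only.\<close>

definition smooth_on :: "real set \<Rightarrow> (real \<Rightarrow> real) \<Rightarrow> bool" where
  "smooth_on S f \<longleftrightarrow> (\<forall>n. \<forall>t\<in>S. ((deriv ^^ n) f) differentiable (at t))"

definition zeta :: "(nat \<Rightarrow> real) \<Rightarrow> real" where
  "zeta p = (\<Sum>i\<in>{1..3}. p i)"

definition eta :: "(nat \<Rightarrow> real) \<Rightarrow> real" where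
  "eta p = (\<Sum>i\<in>{1..3}. (p i)^2)"

definition kg :: "(real \<Rightarrow> real) \<Rightarrow> (nat \<Rightarrow> real) \<Rightarrow> nat \<Rightarrow> nat \<Rightarrow> real \<Rightarrow> real" where
  "kg phi p a b t = (if a \<noteq> b then 0 else if a = 0 then -1 else phi t powr (2 * p a))"

definition kginv :: "(real \<Rightarrow> real) \<Rightarrow> (nat \<Rightarrow> real) \<Rightarrow> nat \<Rightarrow> nat \<Rightarrow> real \<Rightarrow> real" where
  "kginv phi p a b t = (if a \<noteq> b then 0 else if a = 0 then -1 else phi t powr (- 2 * p a))"

text \<open>coordinate partial derivative d/dx^c of a function depending only on t\<close>
definition dcoord :: "(real \<Rightarrow> real) \<Rightarrow> nat \<Rightarrow> real \<Rightarrow> real" where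
  "dcoord f c t = (if c = 0 then deriv f t else 0)"

text \<open>Levi-Civita Christoffel symbols: nabla_{d_i} d_j = sum_k Gamma k i j d_k\<close>
definition christ :: "(real \<Rightarrow> real) \<Rightarrow> (nat \<Rightarrow> real) \<Rightarrow> nat \<Rightarrow> nat \<Rightarrow> nat \<Rightarrow> real \<Rightarrow> real" where
  "christ phi p k i j t = 1/2 * (\<Sum>l<4. kginv phi p k l t *
      (dcoord (kg phi p j l) i t + dcoord (kg phi p i l) j t - dcoord (kg phi p i j) l t))"

text \<open>Connection nablabar_X Y = nabla_X Y + pi(Y) X with pi(Y) = g(Y,P), P = d/dt:
  nablabar_{d_i} d_j = sum_k (Gamma k i j + g(d_j, d_0) delta_ki) d_k\<close>
definition christbar :: "(real \<Rightarrow> real) \<Rightarrow> (nat \<Rightarrow> real) \<Rightarrow> nat \<Rightarrow> nat \<Rightarrow> nat \<Rightarrow> real \<Rightarrow> real" where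
  "christbar phi p k i j t = christ phi p k i j t + (if k = i then kg phi p j 0 t else 0)"

text \<open>Curvature R(X,Y)Z = nablabar_X nablabar_Y Z - nablabar_Y nablabar_X Z - nablabar_[X,Y] Z:
  R(d_i,d_j) d_l = sum_k riembar k i j l d_k\<close>
definition riembar :: "(real \<Rightarrow> real) \<Rightarrow> (nat \<Rightarrow> real) \<Rightarrow> nat \<Rightarrow> nat \<Rightarrow> nat \<Rightarrow> nat \<Rightarrow> real \<Rightarrow> real" where
  "riembar phi p k i j l t =
     dcoord (christbar phi p k j l) i t - dcoord (christbar phi p k i l) j t
     + (\<Sum>m<4. christbar phi p m j l t * christbar phi p k i m t
              - christbar phi p m i l t * christbar phi p k j m t)"

text \<open>Ric(X,Y) = sum_k eps_k g(R(X,E_k)Y, E_k) (frame independent trace):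
  Ric(d_a,d_b) = sum_{c,d} g^cd g(R(d_a,d_c)d_b, d_d)\<close>
definition riccibar :: "(real \<Rightarrow> real) \<Rightarrow> (nat \<Rightarrow> real) \<Rightarrow> nat \<Rightarrow> nat \<Rightarrow> real \<Rightarrow> real" where
  "riccibar phi p a b t = (\<Sum>c<4. \<Sum>d<4. kginv phi p c d t *
      (\<Sum>k<4. riembar phi p k a c b t * kg phi p k d t))"

text \<open>scalar curvature S = sum_k eps_k Ric(E_k,E_k) = sum_{a,b} g^ab Ric(d_a,d_b)\<close>
definition scalarbar :: "(real \<Rightarrow> real) \<Rightarrow> (nat \<Rightarrow> real) \<Rightarrow> real \<Rightarrow> real" where
  "scalarbar phi p t = (\<Sum>a<4. \<Sum>b<4. kginv phi p a b t * riccibar phi p a b t)"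

end

theory Submission
  imports Defs
begin


lemma lessThan4: "{..<4::nat} = {0,1,2,3}" by auto

lemma deriv_kg:
  assumes pos: "phi t > 0" and d1: "(phi has_real_derivative dphi) (at t)"
  shows "deriv (kg phi p a b) t = (if a = b \<and> a \<noteq> 0 then 2 * p a * phi t powr (2 * p a) * (dphi / phi t) else 0)"
proof (cases "a = b \<and> a \<noteq> 0")
  case True
  then have e: "kg phi p a b = (\<lambda>t. phi t powr (2 * p a))" by (auto simp: kg_def)
  have "((\<lambda>t. phi t powr (2 * p a)) has_real_derivative (2 * p a) * phi t powr (2 * p a - of_nat 1) * dphi) (at t)"
    by (rule DERIV_fun_powr[OF d1 pos])
  moreover have "(2 * p a) * phi t powr (2 * p a - of_nat 1) * dphi = 2 * p a * phi t powr (2 * p a) * (dphi / phi t)"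
    using pos by (simp add: powr_diff)
  ultimately show ?thesis using True e by (simp add: DERIV_imp_deriv)
next
  case False
  then have e: "kg phi p a b = (\<lambda>t. if a \<noteq> b then 0 else -1)" by (auto simp: kg_def)
  show ?thesis using False by (auto simp: e)
qed

definition Cb :: "(real \<Rightarrow> real) \<Rightarrow> (real \<Rightarrow> real) \<Rightarrow> (nat \<Rightarrow> real) \<Rightarrow> nat \<Rightarrow> nat \<Rightarrow> nat \<Rightarrow> real \<Rightarrow> real" where
  "Cb phi dphi p k i j t = (if k=0 \<and> i=0 \<and> j=0 then -1
     else if k=0 \<and> i=j then phi t powr (2*p i) * (p i * (dphi t/phi t))
     else if k=i \<and> j=0 then p i*(dphi t/phi t) - 1
     else if k=j \<and> i=0 then p j*(dphi t/phi t) else 0)"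

lemma christbar_eq:
  assumes pos: "phi t > 0" and d1: "(phi has_real_derivative dphi t) (at t)"
    and "k < 4" "i < 4" "j < 4"
  shows "christbar phi p k i j t = Cb phi dphi p k i j t"
proof -
  have dk: "\<And>a b. deriv (kg phi p a b) t = (if a = b \<and> a \<noteq> 0 then 2 * p a * phi t powr (2 * p a) * (dphi t / phi t) else 0)"
    by (rule deriv_kg[OF pos d1])
  have ks: "k \<in> {0,1,2,3}" "i \<in> {0,1,2,3}" "j \<in> {0,1,2,3}" using assms by auto
  have ng: "phi t powr (2 * p a) * phi t powr - (2 * p a) = 1" for a
    using pos by (simp add: powr_add[symmetric])
  show ?thesis
    using ks unfolding christbar_def christ_def dcoord_def Cb_def lessThan4
    apply (simp add: dk kginv_def kg_def)
    apply (elim disjE; simp add: algebra_simps ng)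
    done
qed


definition DCb :: "(real \<Rightarrow> real) \<Rightarrow> (real \<Rightarrow> real) \<Rightarrow> (real \<Rightarrow> real) \<Rightarrow> (nat \<Rightarrow> real) \<Rightarrow> nat \<Rightarrow> nat \<Rightarrow> nat \<Rightarrow> real \<Rightarrow> real" where
  "DCb phi dphi ddphi p k i j t = (let w = ddphi t / phi t - (dphi t / phi t)^2 in
     (if k=0 \<and> i=0 \<and> j=0 then 0
     else if k=0 \<and> i=j then phi t powr (2*p i) * (2*(p i)^2*(dphi t/phi t)^2 + p i * w)
     else if k=i \<and> j=0 then p i * w
     else if k=j \<and> i=0 then p j * w else 0))"

lemma Cb_deriv:
  assumes pos: "phi t > 0" and d1: "(phi has_real_derivative dphi t) (at t)"
    and d2: "(dphi has_real_derivative ddphi t) (at t)"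
  shows "((\<lambda>s. Cb phi dphi p k i j s) has_real_derivative DCb phi dphi ddphi p k i j t) (at t)"
proof -
  define w where "w = ddphi t / phi t - (dphi t / phi t)^2"
  have du: "((\<lambda>s. dphi s / phi s) has_real_derivative w) (at t)"
  proof -
    have "((\<lambda>s. dphi s / phi s) has_real_derivative (ddphi t * phi t - dphi t * dphi t) / (phi t * phi t)) (at t)"
      by (rule DERIV_divide[OF d2 d1]) (use pos in simp)
    moreover have "(ddphi t * phi t - dphi t * dphi t) / (phi t * phi t) = w"
      using pos by (simp add: w_def field_simps power2_eq_square)
    ultimately show ?thesis by simp
  qed
  have dF: "((\<lambda>s. phi s powr (2 * p a)) has_real_derivative 2 * p a * phi t powr (2 * p a) * (dphi t / phi t)) (at t)" for a
  proof -
    have "((\<lambda>t. phi t powr (2 * p a)) has_real_derivative (2 * p a) * phi t powr (2 * p a - of_nat 1) * dphi t) (at t)"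
      by (rule DERIV_fun_powr[OF d1 pos])
    moreover have "(2 * p a) * phi t powr (2 * p a - of_nat 1) * dphi t = 2 * p a * phi t powr (2 * p a) * (dphi t / phi t)"
      using pos by (simp add: powr_diff)
    ultimately show ?thesis by simp
  qed
  consider (a) "k=0 \<and> i=0 \<and> j=0" | (b) "\<not>(k=0 \<and> i=0 \<and> j=0) \<and> k=0 \<and> i=j"
    | (c) "\<not>(k=0 \<and> i=0 \<and> j=0) \<and> \<not>(k=0 \<and> i=j) \<and> k=i \<and> j=0"
    | (d) "\<not>(k=0 \<and> i=0 \<and> j=0) \<and> \<not>(k=0 \<and> i=j) \<and> \<not>(k=i \<and> j=0) \<and> k=j \<and> i=0"
    | (e) "\<not>(k=0 \<and> i=0 \<and> j=0) \<and> \<not>(k=0 \<and> i=j) \<and> \<not>(k=i \<and> j=0) \<and> \<not>(k=j \<and> i=0)"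
    by blast
  then show ?thesis
  proof cases
    case a
    then show ?thesis by (simp add: Cb_def DCb_def)
  next
    case b
    have "((\<lambda>s. phi s powr (2*p i) * (p i * (dphi s/phi s))) has_real_derivative
      phi t powr (2*p i) * (p i * w) + 2 * p i * phi t powr (2 * p i) * (dphi t / phi t) * (p i * (dphi t/phi t))) (at t)"
      by (rule DERIV_mult'[OF dF DERIV_cmult[OF du]])
    moreover have "phi t powr (2*p i) * (p i * w) + 2 * p i * phi t powr (2 * p i) * (dphi t / phi t) * (p i * (dphi t/phi t))
       = DCb phi dphi ddphi p k i j t"
    proof -
      have "k = 0" "i = j" "i \<noteq> 0" using b by auto
      then show ?thesis by (simp add: DCb_def w_def Let_def algebra_simps power2_eq_square)
    qed
    moreover have "(\<lambda>s. Cb phi dphi p k i j s) = (\<lambda>s. phi s powr (2*p i) * (p i * (dphi s/phi s)))"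
    proof -
      have "k = 0" "i = j" "i \<noteq> 0" using b by auto
      then show ?thesis by (simp add: Cb_def fun_eq_iff)
    qed
    ultimately show ?thesis by simp
  next
    case c
    have "((\<lambda>s. p i*(dphi s/phi s) - 1) has_real_derivative p i * w - 0) (at t)"
      by (intro DERIV_diff DERIV_cmult du DERIV_const)
    moreover have "(\<lambda>s. Cb phi dphi p k i j s) = (\<lambda>s. p i*(dphi s/phi s) - 1)"
      using c by (auto simp: Cb_def fun_eq_iff)
    moreover have "DCb phi dphi ddphi p k i j t = p i * w - 0"
      using c by (auto simp: DCb_def Let_def w_def)
    ultimately show ?thesis by simp
  next
    case d
    have "((\<lambda>s. p j*(dphi s/phi s)) has_real_derivative p j * w) (at t)"
      by (intro DERIV_cmult du)
    moreover have "(\<lambda>s. Cb phi dphi p k i j s) = (\<lambda>s. p j*(dphi s/phi s))"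
      using d by (auto simp: Cb_def fun_eq_iff)
    moreover have "DCb phi dphi ddphi p k i j t = p j * w"
      using d by (auto simp: DCb_def Let_def w_def)
    ultimately show ?thesis by simp
  next
    case e
    moreover have "(\<lambda>s. Cb phi dphi p k i j s) = (\<lambda>s. 0)"
      using e by (auto simp: Cb_def fun_eq_iff)
    moreover have "DCb phi dphi ddphi p k i j t = 0"
      using e by (auto simp: DCb_def Let_def w_def)
    ultimately show ?thesis by simp
  qed
qed


lemma christbar_deriv:
  assumes S: "open S" "t \<in> S" and pos: "\<forall>s\<in>S. phi s > 0"
    and d1: "\<forall>s\<in>S. (phi has_real_derivative dphi s) (at s)"
    and d2: "(dphi has_real_derivative ddphi t) (at t)"
    and "k < 4" "i < 4" "j < 4"
  shows "deriv (christbar phi p k i j) t = DCb phi dphi ddphi p k i j t"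
proof -
  have "((\<lambda>s. Cb phi dphi p k i j s) has_real_derivative DCb phi dphi ddphi p k i j t) (at t)"
    using Cb_deriv[of phi t dphi ddphi] pos d1 d2 S by auto
  then have "(christbar phi p k i j has_real_derivative DCb phi dphi ddphi p k i j t) (at t)"
    by (rule has_field_derivative_transform_within_open[OF _ S])
       (use christbar_eq pos d1 assms in auto)
  then show ?thesis by (rule DERIV_imp_deriv)
qed

lemma riembar_eq:
  assumes S: "open S" "t \<in> S" and pos: "\<forall>s\<in>S. phi s > 0"
    and d1: "\<forall>s\<in>S. (phi has_real_derivative dphi s) (at s)"
    and d2: "(dphi has_real_derivative ddphi t) (at t)"
    and "k < 4" "i < 4" "j < 4" "l < 4"
  shows "riembar phi p k i j l t = (if i = 0 then DCb phi dphi ddphi p k j l t else 0)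
     - (if j = 0 then DCb phi dphi ddphi p k i l t else 0)
     + (\<Sum>m<4. Cb phi dphi p m j l t * Cb phi dphi p k i m t - Cb phi dphi p m i l t * Cb phi dphi p k j m t)"
proof -
  have cb: "\<And>a b c. a < 4 \<Longrightarrow> b < 4 \<Longrightarrow> c < 4 \<Longrightarrow> christbar phi p a b c t = Cb phi dphi p a b c t"
    using christbar_eq pos d1 S by auto
  have dc: "\<And>a b c. a < 4 \<Longrightarrow> b < 4 \<Longrightarrow> c < 4 \<Longrightarrow> deriv (christbar phi p a b c) t = DCb phi dphi ddphi p a b c t"
    using christbar_deriv[where S=S and t=t and phi=phi and dphi=dphi and ddphi=ddphi, OF S pos d1 d2] by auto
  show ?thesis unfolding riembar_def dcoord_def
    using assms by (simp add: cb dc)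
qed

lemma zeta3: "zeta p = p 1 + p 2 + p 3"
  by (simp add: zeta_def numeral_eq_Suc atLeastAtMostSuc_conv)
lemma eta3: "eta p = (p 1)^2 + (p 2)^2 + (p 3)^2"
  by (simp add: eta_def numeral_eq_Suc atLeastAtMostSuc_conv)

lemma scalar_formula:
  assumes S: "open S" "t \<in> S" and pos: "\<forall>s\<in>S. phi s > 0"
    and d1: "\<forall>s\<in>S. (phi has_real_derivative dphi s) (at s)"
    and d2: "(dphi has_real_derivative ddphi t) (at t)"
  shows "scalarbar phi p t = 3 + 3 * zeta p * (dphi t / phi t) - 2 * zeta p * (ddphi t / phi t)
     - (eta p + (zeta p)^2 - 2 * zeta p) * (dphi t / phi t)^2"
proof -
  have R: "\<And>k i j l. k < 4 \<Longrightarrow> i < 4 \<Longrightarrow> j < 4 \<Longrightarrow> l < 4 \<Longrightarrow> riembar phi p k i j l t = (if i = 0 then DCb phi dphi ddphi p k j l t else 0)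
     - (if j = 0 then DCb phi dphi ddphi p k i l t else 0)
     + (\<Sum>m<4. Cb phi dphi p m j l t * Cb phi dphi p k i m t - Cb phi dphi p m i l t * Cb phi dphi p k j m t)"
    using riembar_eq[where S=S and t=t and phi=phi and dphi=dphi and ddphi=ddphi, OF S pos d1 d2] by blast
  have pt: "phi t > 0" using pos S by auto
  have ng: "phi t powr (2 * p a) * phi t powr - (2 * p a) = 1" for a
    using pt by (simp add: powr_add[symmetric])
  show ?thesis
  proof -
    define U where "U = dphi t / phi t"
    define V where "V = ddphi t / phi t"
    define F1 where "F1 = phi t powr (2 * p 1)"
    define F2 where "F2 = phi t powr (2 * p 2)"
    define F3 where "F3 = phi t powr (2 * p 3)"
    have F: "F1 > 0" "F2 > 0" "F3 > 0" using pt by (auto simp: F1_def F2_def F3_def)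
    have e1: "dphi t / phi t = U" "ddphi t / phi t = V" by (simp_all add: U_def V_def)
    have e2: "phi t powr (2 * p 1) = F1" "phi t powr (2 * p 2) = F2" "phi t powr (2 * p 3) = F3"
      by (simp_all add: F1_def F2_def F3_def)
    have e3: "phi t powr (2 * p (Suc 0)) = F1" by (simp add: F1_def)
    have "scalarbar phi p t = 3 + 3 * zeta p * U - 2 * zeta p * V - (eta p + (zeta p)^2 - 2 * zeta p) * U^2"
      unfolding scalarbar_def riccibar_def lessThan4 zeta3 eta3
      apply (simp add: R kginv_def kg_def lessThan4)
      apply (simp add: Cb_def DCb_def Let_def powr_minus e1 e2 e3)
      using F apply (simp add: field_simps)
      apply (simp add: algebra_simps power2_eq_square)
      done
    then show ?thesis by (simp add: U_def V_def)
  qed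
qed



lemma const_deriv0:
  fixes f :: "real \<Rightarrow> real"
  assumes "a < b" "\<And>x. x \<in> {a<..<b} \<Longrightarrow> (f has_real_derivative 0) (at x)"
    "x \<in> {a<..<b}" "z \<in> {a<..<b}"
  shows "f x = f z"
  using DERIV_isconst3[OF assms(1,3,4)] assms(2) by blast

lemma ode_real:
  fixes y y1 :: "real \<Rightarrow> real"
  assumes ab: "a < b"
    and hy: "\<And>x. x \<in> {a<..<b} \<Longrightarrow> (y has_real_derivative y1 x) (at x)"
    and hy1: "\<And>x. x \<in> {a<..<b} \<Longrightarrow> (y1 has_real_derivative ((r1+r2)*y1 x - r1*r2*y x)) (at x)"
  shows "r1 \<noteq> r2 \<Longrightarrow> \<exists>c1 c2. \<forall>x\<in>{a<..<b}. y x = c1*exp(r1*x) + c2*exp(r2*x)"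
    and "r1 = r2 \<Longrightarrow> \<exists>c1 c2. \<forall>x\<in>{a<..<b}. y x = c1*exp(r1*x) + c2*x*exp(r1*x)"
proof -
  define x0 where "x0 = (a+b)/2"
  have x0: "x0 \<in> {a<..<b}" using ab by (auto simp: x0_def)
  define A where "A = (y1 x0 - r2 * y x0) * exp(-r1*x0)"
  have w: "y1 x - r2 * y x = A * exp(r1*x)" if x: "x \<in> {a<..<b}" for x
  proof -
    have "(\<lambda>x. (y1 x - r2 * y x) * exp(-r1*x)) x = (\<lambda>x. (y1 x - r2 * y x) * exp(-r1*x)) x0"
    proof (rule const_deriv0[OF ab _ x x0])
      fix s assume s: "s \<in> {a<..<b}"
      show "((\<lambda>x. (y1 x - r2 * y x) * exp(-r1*x)) has_real_derivative 0) (at s)"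
        by (rule derivative_eq_intros hy1[OF s] hy[OF s] refl | simp)+ (simp add: algebra_simps)
    qed
    then have "(y1 x - r2 * y x) * exp(-r1*x) = A" by (simp add: A_def)
    then have "(y1 x - r2 * y x) * exp(-r1*x) * exp(r1*x) = A * exp(r1*x)" by simp
    then show ?thesis by (simp add: mult.assoc exp_add[symmetric])
  qed
  show "r1 \<noteq> r2 \<Longrightarrow> \<exists>c1 c2. \<forall>x\<in>{a<..<b}. y x = c1*exp(r1*x) + c2*exp(r2*x)"
  proof -
    assume ne: "r1 \<noteq> r2"
    define B where "B = A/(r1-r2)"
    have hB: "A = B * (r1 - r2)" using ne by (simp add: B_def)
    define g where "g = (\<lambda>x. y x * exp(-r2*x) - B * exp((r1-r2)*x))"
    have g: "g x = g x0" if x: "x \<in> {a<..<b}" for x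
    proof (rule const_deriv0[OF ab _ x x0])
      fix z assume z: "z \<in> {a<..<b}"
      have hyz: "(y has_real_derivative y1 z) (at z)" by (rule hy[OF z])
      have "(g has_real_derivative ((y1 z - r2 * y z) * exp(-r2*z) - A * exp((r1-r2)*z))) (at z)"
        unfolding g_def
        unfolding hB by (auto intro!: derivative_eq_intros hyz simp: algebra_simps)
      moreover have "(y1 z - r2 * y z) * exp(-r2*z) - A * exp((r1-r2)*z) = 0"
        using w[OF z] by (simp add: exp_add[symmetric] algebra_simps)
      ultimately show "(g has_real_derivative 0) (at z)" by simp
    qed
    show ?thesis
    proof (intro exI ballI)
      fix x assume x: "x \<in> {a<..<b}"
      have "y x * exp(-r2*x) = g x0 + B * exp((r1-r2)*x)" using g[OF x] by (simp add: g_def)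
      then have "y x * exp(-r2*x) * exp(r2*x) = (g x0 + B * exp((r1-r2)*x)) * exp(r2*x)" by simp
      then show "y x = B * exp(r1*x) + g x0 * exp(r2*x)"
        by (simp add: mult.assoc exp_add[symmetric] algebra_simps)
    qed
  qed
  show "r1 = r2 \<Longrightarrow> \<exists>c1 c2. \<forall>x\<in>{a<..<b}. y x = c1*exp(r1*x) + c2*x*exp(r1*x)"
  proof -
    assume eq: "r1 = r2"
    define g where "g = (\<lambda>x. y x * exp(-r2*x) - A * x)"
    have g: "g x = g x0" if x: "x \<in> {a<..<b}" for x
    proof (rule const_deriv0[OF ab _ x x0])
      fix z assume z: "z \<in> {a<..<b}"
      have hyz: "(y has_real_derivative y1 z) (at z)" by (rule hy[OF z])
      have "(g has_real_derivative ((y1 z - r2 * y z) * exp(-r2*z) - A)) (at z)"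
        unfolding g_def
        by (auto intro!: derivative_eq_intros hyz simp: field_simps)
      moreover have "(y1 z - r2 * y z) * exp(-r2*z) - A = 0"
        using w[OF z] eq by (simp add: exp_add[symmetric] algebra_simps)
      ultimately show "(g has_real_derivative 0) (at z)" by simp
    qed
    show ?thesis
    proof (intro exI ballI)
      fix x assume x: "x \<in> {a<..<b}"
      have "y x * exp(-r2*x) = g x0 + A * x" using g[OF x] by (simp add: g_def)
      then have "y x * exp(-r2*x) * exp(r2*x) = (g x0 + A * x) * exp(r2*x)" by simp
      then show "y x = g x0 * exp(r1*x) + A * x * exp(r1*x)"
        using eq by (simp add: mult.assoc exp_add[symmetric] algebra_simps)
    qed
  qed
qed


lemma ode_complex:
  fixes y y1 :: "real \<Rightarrow> real"
  assumes ab: "a < b" and om: "w > 0"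
    and hy: "\<And>x. x \<in> {a<..<b} \<Longrightarrow> (y has_real_derivative y1 x) (at x)"
    and hy1: "\<And>x. x \<in> {a<..<b} \<Longrightarrow> (y1 has_real_derivative (2*m*y1 x - (m^2+w^2)*y x)) (at x)"
  shows "\<exists>c1 c2. \<forall>x\<in>{a<..<b}. y x = c1*exp(m*x)*cos(w*x) + c2*exp(m*x) * sin(w*x)"
proof -
  define z where "z = (\<lambda>x. y x * exp(-m*x))"
  define z1 where "z1 = (\<lambda>x. (y1 x - m * y x) * exp(-m*x))"
  have dz: "(z has_real_derivative z1 x) (at x)" if x: "x \<in> {a<..<b}" for x
  proof -
    have h: "(y has_real_derivative y1 x) (at x)" by (rule hy[OF x])
    show ?thesis unfolding z_def z1_def
      by (auto intro!: derivative_eq_intros h simp: algebra_simps)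
  qed
  have dz1: "(z1 has_real_derivative (-(w^2) * z x)) (at x)" if x: "x \<in> {a<..<b}" for x
  proof -
    have h: "(y has_real_derivative y1 x) (at x)" by (rule hy[OF x])
    have h1: "(y1 has_real_derivative (2*m*y1 x - (m^2+w^2)*y x)) (at x)" by (rule hy1[OF x])
    show ?thesis unfolding z_def z1_def
      by (auto intro!: derivative_eq_intros h h1 simp: algebra_simps power2_eq_square)
  qed
  define x0 where "x0 = (a+b)/2"
  have x0: "x0 \<in> {a<..<b}" using ab by (auto simp: x0_def)
  define c1 where "c1 = z x0 * cos(w*x0) - (z1 x0 / w) * sin(w*x0)"
  define c2 where "c2 = z x0 * sin(w*x0) + (z1 x0 / w) * cos(w*x0)"
  define e where "e = (\<lambda>x. z x - (c1 * cos(w*x) + c2 * sin(w*x)))"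
  define e1 where "e1 = (\<lambda>x. z1 x - w * (- c1 * sin(w*x) + c2 * cos(w*x)))"
  define H where "H = (\<lambda>x. w^2 * (e x)^2 + (e1 x)^2)"
  have H0: "H x0 = 0"
  proof -
    have sc: "(sin(w*x0))^2 + (cos(w*x0))^2 = 1" by simp
    have "c1 * cos(w*x0) + c2 * sin(w*x0) = z x0"
      by (simp add: c1_def c2_def algebra_simps) (metis distrib_left mult_1_right sin_cos_squared_add3)
    then have a1: "e x0 = 0" by (simp add: e_def)
    have "w * (- c1 * sin(w*x0) + c2 * cos(w*x0)) = z1 x0"
      using om by (simp add: c1_def c2_def algebra_simps) (metis distrib_left mult_1_right sin_cos_squared_add3)
    then have a2: "e1 x0 = 0" by (simp add: e1_def)
    show ?thesis using a1 a2 by (simp add: H_def)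
  qed
  have Hc: "H x = H x0" if x: "x \<in> {a<..<b}" for x
  proof (rule const_deriv0[OF ab _ x x0])
    fix u assume u: "u \<in> {a<..<b}"
    have h: "(z has_real_derivative z1 u) (at u)" by (rule dz[OF u])
    have h1: "(z1 has_real_derivative (-(w^2) * z u)) (at u)" by (rule dz1[OF u])
    show "(H has_real_derivative 0) (at u)" unfolding H_def e_def e1_def
      by (auto intro!: derivative_eq_intros h h1 simp: algebra_simps power2_eq_square)
  qed
  show ?thesis
  proof (intro exI ballI)
    fix x assume x: "x \<in> {a<..<b}"
    have "w^2 * (e x)^2 + (e1 x)^2 = 0" using Hc[OF x] H0 by (simp add: H_def)
    moreover have "w^2 > 0" using om by simp
    ultimately have "e x = 0"
      by (smt (verit) mult_pos_pos zero_le_power2 zero_less_power2)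
    then have "z x = c1 * cos(w*x) + c2 * sin(w*x)" by (simp add: e_def)
    then have "y x * exp(-m*x) * exp(m*x) = (c1 * cos(w*x) + c2 * sin(w*x)) * exp(m*x)"
      by (simp add: z_def)
    then show "y x = c1*exp(m*x)*cos(w*x) + c2*exp(m*x) * sin(w*x)"
      by (simp add: mult.assoc exp_add[symmetric] algebra_simps)
  qed
qed



lemma exp_sol:
  fixes phi dphi :: "real \<Rightarrow> real"
  assumes ab: "a < b" and pos: "\<forall>t\<in>{a<..<b}. phi t > 0"
    and d1: "\<forall>t\<in>{a<..<b}. (phi has_real_derivative dphi t) (at t)"
    and d2: "\<forall>t\<in>{a<..<b}. (dphi has_real_derivative ddphi t) (at t)"
    and sq: "\<forall>t\<in>{a<..<b}. (dphi t / phi t)^2 = s^2" and s: "s > 0"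
  shows "\<exists>c0>0. \<exists>\<sigma>\<in>{-1, 1::real}. \<forall>t\<in>{a<..<b}. phi t = c0 * exp (\<sigma> * s * t)"
proof -
  define u where "u = (\<lambda>t. dphi t / phi t)"
  have ucont: "continuous_on {x..y} u" if "x \<in> {a<..<b}" "y \<in> {a<..<b}" for x y
  proof -
    have sub: "{x..y} \<subseteq> {a<..<b}" using that by auto
    have "\<forall>t\<in>{x..y}. isCont u t"
    proof
      fix t assume "t \<in> {x..y}"
      then have t: "t \<in> {a<..<b}" using sub by auto
      have "isCont dphi t" using d2 t DERIV_isCont by blast
      moreover have "isCont phi t" using d1 t DERIV_isCont by blast
      moreover have "phi t \<noteq> 0" using pos t by force
      ultimately show "isCont u t" unfolding u_def
        by (intro continuous_intros) auto
    qed
    then show ?thesis by (rule continuous_at_imp_continuous_on)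
  qed
  define x0 where "x0 = (a+b)/2"
  have x0: "x0 \<in> {a<..<b}" using ab by (auto simp: x0_def)
  define \<sigma> where "\<sigma> = u x0 / s"
  have usq: "(u t)^2 = s^2" if "t \<in> {a<..<b}" for t using sq that by (simp add: u_def)
  have uval: "u t = s \<or> u t = -s" if "t \<in> {a<..<b}" for t
    using usq[OF that] by (metis power2_eq_iff)
  have sig: "\<sigma> \<in> {-1,1}" using uval[OF x0] s by (auto simp: \<sigma>_def)
  have ux0: "u x0 = \<sigma> * s" using s by (simp add: \<sigma>_def)
  have uc: "u t = \<sigma> * s" if t: "t \<in> {a<..<b}" for t
  proof (rule ccontr)
    assume ne: "u t \<noteq> \<sigma> * s"
    have opp: "u t = - u x0" using uval[OF t] uval[OF x0] ne ux0 s sig by auto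
    define lo where "lo = min x0 t"
    define hi where "hi = max x0 t"
    have lohi: "lo \<in> {a<..<b}" "hi \<in> {a<..<b}" "lo \<le> hi" using t x0 by (auto simp: lo_def hi_def)
    have opp2: "u lo = - u hi" using opp by (auto simp: lo_def hi_def min_def max_def)
    have cont: "continuous_on {lo..hi} u" by (rule ucont[OF lohi(1,2)])
    have "\<exists>c. lo \<le> c \<and> c \<le> hi \<and> u c = 0"
    proof (cases "u lo \<le> 0")
      case True
      then show ?thesis using IVT'[of u lo 0 hi, OF True _ lohi(3) cont] opp2 by auto
    next
      case False
      then show ?thesis using IVT2'[of u hi 0 lo, OF _ _ lohi(3) cont] opp2 by auto
    qed
    then obtain c where c: "lo \<le> c" "c \<le> hi" "u c = 0" by blast
    have "c \<in> {a<..<b}" using c lohi by auto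
    then have "(u c)^2 = s^2" by (rule usq)
    then show False using c s by simp
  qed
  define g where "g = (\<lambda>t. phi t * exp (- (\<sigma> * s) * t))"
  have gc: "g t = g x0" if t: "t \<in> {a<..<b}" for t
  proof (rule const_deriv0[OF ab _ t x0])
    fix z assume z: "z \<in> {a<..<b}"
    have h: "(phi has_real_derivative dphi z) (at z)" using d1 z by blast
    have "(g has_real_derivative (dphi z * exp (- (\<sigma> * s) * z) - phi z * (\<sigma> * s) * exp (- (\<sigma> * s) * z))) (at z)"
      unfolding g_def by (auto intro!: derivative_eq_intros h simp: algebra_simps)
    moreover have "dphi z = \<sigma> * s * phi z"
    proof -
      have "phi z > 0" using pos z by blast
      then show ?thesis using uc[OF z] by (simp add: u_def field_simps)
    qed
    ultimately show "(g has_real_derivative 0) (at z)" by (simp add: algebra_simps)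
  qed
  show ?thesis
  proof (intro exI conjI bexI ballI)
    show "g x0 > 0" using pos x0 by (simp add: g_def)
    show "\<sigma> \<in> {-1,1}" by (rule sig)
    fix t assume t: "t \<in> {a<..<b}"
    have "phi t * exp (- (\<sigma> * s) * t) * exp (\<sigma> * s * t) = g x0 * exp (\<sigma> * s * t)"
      using gc[OF t] by (simp add: g_def)
    then show "phi t = g x0 * exp (\<sigma> * s * t)" by (simp add: mult.assoc exp_add[symmetric])
  qed
qed



lemma eta_nonneg: "eta p \<ge> 0" by (simp add: eta3)

lemma K_pos: "zeta p \<noteq> 0 \<Longrightarrow> eta p + (zeta p)^2 > 0"
  using eta_nonneg[of p] by (simp add: add_nonneg_pos)

lemma alg3:
  fixes Z E k c q Sb :: real
  assumes Z: "Z \<noteq> 0" and K: "E + Z^2 > 0" and kdef: "k = 2 * Z / (E + Z^2)"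
    and cdef: "c = (Sb - 3) * (E + Z^2) / (4 * Z^2)"
  shows "3 + 3 * Z * (k * q) - 2 * Z * (k*(k-1)*q^2 + k*(3/2*q - c)) - (E + Z^2 - 2 * Z) * (k * q)^2 = Sb"
proof -
  define K where "K = E + Z^2"
  have Kp: "K > 0" using K by (simp add: K_def)
  have h1: "k * K = 2 * Z" using Kp by (simp add: kdef K_def)
  have k': "k = 2 * Z / K" by (simp add: kdef K_def)
  have c': "c = (Sb - 3) * K / (4 * Z^2)" by (simp add: cdef K_def)
  have h2: "2 * Z * k * c = Sb - 3" using Kp Z unfolding k' c' by (simp add: field_simps power2_eq_square)
  have "3 + 3 * Z * (k * q) - 2 * Z * (k*(k-1)*q^2 + k*(3/2*q - c)) - (E + Z^2 - 2 * Z) * (k * q)^2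
      = 3 + q^2 * k * (2 * Z - k * K) + 2 * Z * k * c"
    by (simp add: K_def algebra_simps power2_eq_square)
  also have "\<dots> = Sb" using h1 h2 by simp
  finally show ?thesis .
qed

lemma rev3:
  fixes phi y yd ydd :: "real \<Rightarrow> real"
  assumes pos: "\<forall>s\<in>{a<..<b}. y s > 0"
    and hy: "\<forall>s\<in>{a<..<b}. (y has_real_derivative yd s) (at s)"
    and hy1: "\<forall>s\<in>{a<..<b}. (yd has_real_derivative ydd s) (at s)"
    and ode: "\<forall>s\<in>{a<..<b}. ydd s = 3/2 * yd s - c * y s"
    and ph: "\<forall>s\<in>{a<..<b}. phi s = y s powr k"
    and Z: "zeta p \<noteq> 0" and kdef: "k = 2 * zeta p / (eta p + (zeta p)^2)"
    and cdef: "c = (Sb - 3) * (eta p + (zeta p)^2) / (4 * (zeta p)^2)"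
    and t: "t \<in> {a<..<b}"
  shows "scalarbar phi p t = Sb"
proof -
  define D1 where "D1 = (\<lambda>s. k * y s powr (k - 1) * yd s)"
  define D2 where "D2 = (\<lambda>s::real. k * ((k - 1) * y t powr (k - 1 - 1) * yd t) * yd t + k * y t powr (k - 1) * ydd t)"
  have ppos: "\<forall>s\<in>{a<..<b}. phi s > 0" using pos ph by force
  have dphi: "\<forall>s\<in>{a<..<b}. (phi has_real_derivative D1 s) (at s)"
  proof
    fix s assume s: "s \<in> {a<..<b}"
    have "((\<lambda>x. y x powr k) has_real_derivative k * y s powr (k - of_nat 1) * yd s) (at s)"
      using DERIV_fun_powr[where g=y and x=s and m="yd s" and r=k] hy pos s by auto
    then have "((\<lambda>x. y x powr k) has_real_derivative D1 s) (at s)" by (simp add: D1_def)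
    then show "(phi has_real_derivative D1 s) (at s)"
      by (rule has_field_derivative_transform_within_open[of _ _ _ "{a<..<b}"]) (use s ph in auto)
  qed
  have ddphi: "(D1 has_real_derivative D2 t) (at t)"
  proof -
    have a1: "((\<lambda>x. y x powr (k-1)) has_real_derivative (k-1) * y t powr (k - 1 - of_nat 1) * yd t) (at t)"
      using DERIV_fun_powr[where g=y and x=t and m="yd t" and r="k-1"] hy pos t by auto
    have a2: "(yd has_real_derivative ydd t) (at t)" using hy1 t by auto
    have "((\<lambda>x. k * y x powr (k-1) * yd x) has_real_derivative
        k * ((k-1) * y t powr (k - 1 - of_nat 1) * yd t) * yd t + ydd t * (k * y t powr (k-1))) (at t)"
      by (rule DERIV_mult[OF DERIV_cmult[OF a1] a2])
    then show ?thesis by (simp add: D1_def D2_def algebra_simps)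
  qed
  have SF: "scalarbar phi p t = 3 + 3 * zeta p * (D1 t / phi t) - 2 * zeta p * (D2 t / phi t)
     - (eta p + (zeta p)^2 - 2 * zeta p) * (D1 t / phi t)^2"
    by (rule scalar_formula[where S="{a<..<b}"]) (use t ppos dphi ddphi in auto)
  define Y where "Y = y t"
  define q where "q = yd t / y t"
  have Yp: "Y > 0" using pos t by (simp add: Y_def)
  have P: "phi t = Y powr k" using ph t by (simp add: Y_def)
  have pw1: "Y powr (k - 1) = Y powr k / Y" using Yp by (simp add: powr_diff)
  have pw2: "Y powr (k - 2) = Y powr k / Y^2" using Yp by (simp add: powr_diff power2_eq_square)
  have Pp: "Y powr k > 0" using Yp by simp
  have yt: "y t = Y" by (simp add: Y_def)
  have y1t: "yd t = q * Y" using Yp by (simp add: q_def Y_def)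
  have y2t: "ydd t = 3/2 * (q * Y) - c * Y" using ode t yt y1t by auto
  have e1: "D1 t / phi t = k * q"
    using Yp Pp by (simp add: D1_def P pw1 yt y1t field_simps)
  have e2: "D2 t / phi t = k*(k-1)*q^2 + k*(3/2*q - c)"
    using Yp Pp by (simp add: D2_def P pw1 pw2 yt y1t y2t field_simps power2_eq_square)
  have K: "eta p + (zeta p)^2 > 0" using K_pos[OF Z] .
  show ?thesis unfolding SF e1 e2
    by (rule alg3[OF Z K kdef cdef])
qed



lemma alg_fwd:
  fixes Z E k c u v Sb :: real
  assumes Z: "Z \<noteq> 0" and K: "E + Z^2 > 0" and kdef: "k = 2 * Z / (E + Z^2)"
    and cdef: "c = (Sb - 3) * (E + Z^2) / (4 * Z^2)"
    and rel: "3 + 3 * Z * u - 2 * Z * v - (E + Z^2 - 2 * Z) * u^2 = Sb"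
  shows "u^2 / k + v - u^2 = 3/2 * u - c * k"
proof -
  define K where "K = E + Z^2"
  have Kp: "K > 0" using K by (simp add: K_def)
  have k': "k = 2 * Z / K" by (simp add: kdef K_def)
  have c': "c = (Sb - 3) * K / (4 * Z^2)" by (simp add: cdef K_def)
  have rel': "2 * Z * v = 3 - Sb + 3 * Z * u - (K - 2 * Z) * u^2" using rel by (simp add: K_def algebra_simps)
  have ck: "c * k = (Sb - 3) / (2 * Z)" unfolding c' k' using Kp Z by (simp add: field_simps power2_eq_square)
  have ik: "u^2 / k = K * u^2 / (2 * Z)" unfolding k' using Kp Z by (simp add: field_simps)
  have "v = (3 - Sb + 3 * Z * u - (K - 2 * Z) * u^2) / (2 * Z)" using rel' Z by (simp add: field_simps)
  then show ?thesis unfolding ck ik using Z by (simp add: field_simps power2_eq_square)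
qed

lemma DB_rel:
  fixes Z E Sb D B :: real
  assumes Z: "Z \<noteq> 0" and K: "E + Z^2 > 0"
    and Ddef: "D = 9/4 - (Sb - 3) * (E + Z^2) / Z^2"
    and Bdef: "B = 9 * Z^2 / (4 * (E + Z^2)) + 3"
  shows "D = (B - Sb) * ((E + Z^2) / Z^2)"
proof -
  have g: "(9 * Z^2 / (4 * K) + 3 - Sb) * (K / Z^2) = 9/4 - (Sb - 3) * K / Z^2" if "K > 0" for K
    using that Z by (simp add: field_simps power2_eq_square)
  show ?thesis unfolding Ddef Bdef using g[OF K] by simp
qed

lemma DB_signs:
  fixes Z E Sb D B :: real
  assumes Z: "Z \<noteq> 0" and K: "E + Z^2 > 0"
    and Ddef: "D = 9/4 - (Sb - 3) * (E + Z^2) / Z^2"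
    and Bdef: "B = 9 * Z^2 / (4 * (E + Z^2)) + 3"
  shows "(Sb < B \<longleftrightarrow> D > 0)" "(Sb = B \<longleftrightarrow> D = 0)" "(Sb > B \<longleftrightarrow> D < 0)"
proof -
  obtain q where e: "D = (B - Sb) * q" and q: "q > 0"
    using DB_rel[OF Z K Ddef Bdef] K Z by (intro that[of "(E + Z^2) / Z^2"]) auto
  show "(Sb < B \<longleftrightarrow> D > 0)" unfolding e using q by (simp add: zero_less_mult_iff)
  show "(Sb = B \<longleftrightarrow> D = 0)" unfolding e using q by auto
  show "(Sb > B \<longleftrightarrow> D < 0)" unfolding e using q by (simp add: mult_less_0_iff)
qed

lemma fwd3:
  fixes phi dphi ddphi :: "real \<Rightarrow> real" and Z E Sb D k B :: real
  assumes ab: "a < b" and pos: "\<forall>t\<in>{a<..<b}. phi t > 0"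
    and d1: "\<forall>t\<in>{a<..<b}. (phi has_real_derivative dphi t) (at t)"
    and d2: "\<forall>t\<in>{a<..<b}. (dphi has_real_derivative ddphi t) (at t)"
    and rel: "\<forall>t\<in>{a<..<b}. 3 + 3 * Z * (dphi t / phi t) - 2 * Z * (ddphi t / phi t)
                 - (E + Z^2 - 2 * Z) * (dphi t / phi t)^2 = Sb"
    and Z: "Z \<noteq> 0" and K: "E + Z^2 > 0"
    and Ddef: "D = 9/4 - (Sb - 3) * (E + Z^2) / Z^2"
    and kdef: "k = 2 * Z / (E + Z^2)"
    and Bdef: "B = 9 * Z^2 / (4 * (E + Z^2)) + 3"
  shows "(Sb < B \<longrightarrow> (\<exists>c1 c2. \<forall>t\<in>{a<..<b}.
              c1 * exp ((3/2 + sqrt D) / 2 * t) + c2 * exp ((3/2 - sqrt D) / 2 * t) > 0 \<and>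
              phi t = (c1 * exp ((3/2 + sqrt D) / 2 * t) + c2 * exp ((3/2 - sqrt D) / 2 * t)) powr k))
        \<and> (Sb = B \<longrightarrow> (\<exists>c1 c2. \<forall>t\<in>{a<..<b}.
              c1 * exp (3/4 * t) + c2 * t * exp (3/4 * t) > 0 \<and>
              phi t = (c1 * exp (3/4 * t) + c2 * t * exp (3/4 * t)) powr k))
        \<and> (Sb > B \<longrightarrow> (\<exists>c1 c2. \<forall>t\<in>{a<..<b}.
              c1 * exp (3/4 * t) * cos (sqrt (- D) / 2 * t) + c2 * exp (3/4 * t) * sin (sqrt (- D) / 2 * t) > 0 \<and>
              phi t = (c1 * exp (3/4 * t) * cos (sqrt (- D) / 2 * t)
                       + c2 * exp (3/4 * t) * sin (sqrt (- D) / 2 * t)) powr k))"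
proof -
  define c where "c = (Sb - 3) * (E + Z^2) / (4 * Z^2)"
  have knz: "k \<noteq> 0" using Z K by (simp add: kdef)
  have Dc: "D = 9/4 - 4 * c" using Z by (simp add: Ddef c_def field_simps power2_eq_square)
  define y where "y = (\<lambda>s. phi s powr (1/k))"
  define y1 where "y1 = (\<lambda>s. (1/k) * y s * (dphi s / phi s))"
  have ypos: "\<forall>s\<in>{a<..<b}. y s > 0" using pos by (force simp: y_def)
  have yk: "\<forall>s\<in>{a<..<b}. phi s = y s powr k"
    using pos knz by (force simp: y_def powr_powr)
  have hy: "(y has_real_derivative y1 s) (at s)" if s: "s \<in> {a<..<b}" for s
  proof -
    have ps: "phi s > 0" using pos s by blast
    have "((\<lambda>x. phi x powr (1/k)) has_real_derivative (1/k) * phi s powr (1/k - of_nat 1) * dphi s) (at s)"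
      using DERIV_fun_powr[where g=phi and x=s and m="dphi s" and r="1/k"] d1 ps s by auto
    moreover have "(1/k) * phi s powr (1/k - of_nat 1) * dphi s = y1 s"
      using ps by (simp add: y1_def y_def powr_diff)
    ultimately show ?thesis by (simp add: y_def)
  qed
  have hy1: "(y1 has_real_derivative (3/2 * y1 s - c * y s)) (at s)" if s: "s \<in> {a<..<b}" for s
  proof -
    have ps: "phi s > 0" using pos s by blast
    have h0: "(y has_real_derivative y1 s) (at s)" by (rule hy[OF s])
    have h1: "(phi has_real_derivative dphi s) (at s)" using d1 s by blast
    have h2: "(dphi has_real_derivative ddphi s) (at s)" using d2 s by blast
    define u where "u = dphi s / phi s"
    define v where "v = ddphi s / phi s"
    have hq: "((\<lambda>x. dphi x / phi x) has_real_derivative (ddphi s * phi s - dphi s * dphi s) / (phi s * phi s)) (at s)"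
      by (rule DERIV_divide[OF h2 h1]) (use ps in simp)
    have "((\<lambda>x. (1/k) * y x * (dphi x / phi x)) has_real_derivative
        (1/k) * y s * ((ddphi s * phi s - dphi s * dphi s) / (phi s * phi s)) + (1/k) * y1 s * (dphi s / phi s)) (at s)"
      by (rule DERIV_mult'[OF DERIV_cmult[OF h0] hq])
    moreover have "(1/k) * y s * ((ddphi s * phi s - dphi s * dphi s) / (phi s * phi s)) + (1/k) * y1 s * (dphi s / phi s)
        = (1/k) * y s * (u^2 / k + v - u^2)"
      using ps knz by (simp add: y1_def u_def v_def field_simps power2_eq_square)
    moreover have "u^2 / k + v - u^2 = 3/2 * u - c * k"
      by (rule alg_fwd[OF Z K kdef c_def]) (use rel s in \<open>simp add: u_def v_def\<close>)
    moreover have "(1/k) * y s * (3/2 * u - c * k) = 3/2 * y1 s - c * y s"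
      using knz by (simp add: y1_def u_def field_simps)
    ultimately show ?thesis by (simp add: y1_def)
  qed
  have signs: "(Sb < B \<longleftrightarrow> D > 0)" "(Sb = B \<longleftrightarrow> D = 0)" "(Sb > B \<longleftrightarrow> D < 0)"
    using DB_signs[OF Z K Ddef Bdef] by auto
  have A: "Sb < B \<longrightarrow> (\<exists>c1 c2. \<forall>t\<in>{a<..<b}.
              c1 * exp ((3/2 + sqrt D) / 2 * t) + c2 * exp ((3/2 - sqrt D) / 2 * t) > 0 \<and>
              phi t = (c1 * exp ((3/2 + sqrt D) / 2 * t) + c2 * exp ((3/2 - sqrt D) / 2 * t)) powr k)"
  proof
    assume "Sb < B"
    then have Dp: "D > 0" using signs by simp
    define r1 where "r1 = (3/2 + sqrt D) / 2"
    define r2 where "r2 = (3/2 - sqrt D) / 2"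
    have ne: "r1 \<noteq> r2" using Dp by (simp add: r1_def r2_def)
    have sq: "(sqrt D)^2 = D" using Dp by simp
    have rs: "r1 + r2 = 3/2" "r1 * r2 = c"
      using sq by (simp_all add: r1_def r2_def Dc field_simps power2_eq_square)
    have hy1': "(y1 has_real_derivative ((r1+r2)*y1 s - r1*r2*y s)) (at s)" if s: "s \<in> {a<..<b}" for s
    proof -
      have "(r1+r2)*y1 s - r1*r2*y s = 3/2 * y1 s - c * y s" using rs by simp
      then show ?thesis using hy1[OF s] by simp
    qed
    obtain c1 c2 where cc: "\<forall>x\<in>{a<..<b}. y x = c1*exp(r1*x) + c2*exp(r2*x)"
      using ode_real(1)[OF ab hy hy1' ne] by blast
    show "\<exists>c1 c2. \<forall>t\<in>{a<..<b}.
              c1 * exp ((3/2 + sqrt D) / 2 * t) + c2 * exp ((3/2 - sqrt D) / 2 * t) > 0 \<and>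
              phi t = (c1 * exp ((3/2 + sqrt D) / 2 * t) + c2 * exp ((3/2 - sqrt D) / 2 * t)) powr k"
      using cc ypos yk unfolding r1_def r2_def by (intro exI[of _ c1] exI[of _ c2]) auto
  qed
  have Bq: "Sb = B \<longrightarrow> (\<exists>c1 c2. \<forall>t\<in>{a<..<b}.
              c1 * exp (3/4 * t) + c2 * t * exp (3/4 * t) > 0 \<and>
              phi t = (c1 * exp (3/4 * t) + c2 * t * exp (3/4 * t)) powr k)"
  proof
    assume "Sb = B"
    then have D0: "D = 0" using signs by simp
    have cv: "c = 9/16" using D0 Dc by simp
    have hy1': "(y1 has_real_derivative ((3/4+3/4)*y1 s - 3/4*(3/4)*y s)) (at s)" if s: "s \<in> {a<..<b}" for s
      using hy1[OF s] cv by simp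
    obtain c1 c2 where cc: "\<forall>x\<in>{a<..<b}. y x = c1*exp(3/4*x) + c2*x*exp(3/4*x)"
      using ode_real(2)[OF ab hy hy1'] by blast
    show "\<exists>c1 c2. \<forall>t\<in>{a<..<b}.
              c1 * exp (3/4 * t) + c2 * t * exp (3/4 * t) > 0 \<and>
              phi t = (c1 * exp (3/4 * t) + c2 * t * exp (3/4 * t)) powr k"
      using cc ypos yk by (intro exI[of _ c1] exI[of _ c2]) auto
  qed
  have C: "Sb > B \<longrightarrow> (\<exists>c1 c2. \<forall>t\<in>{a<..<b}.
              c1 * exp (3/4 * t) * cos (sqrt (- D) / 2 * t) + c2 * exp (3/4 * t) * sin (sqrt (- D) / 2 * t) > 0 \<and>
              phi t = (c1 * exp (3/4 * t) * cos (sqrt (- D) / 2 * t)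
                       + c2 * exp (3/4 * t) * sin (sqrt (- D) / 2 * t)) powr k)"
  proof
    assume "Sb > B"
    then have Dn: "D < 0" using signs by simp
    define w where "w = sqrt (- D) / 2"
    have wp: "w > 0" using Dn by (simp add: w_def)
    have sq: "(sqrt (-D))^2 = -D" using Dn by simp
    have mw: "(3/4)^2 + w^2 = c" using sq by (simp add: w_def Dc field_simps power2_eq_square)
    have hy1': "(y1 has_real_derivative (2*(3/4)*y1 s - ((3/4)^2+w^2)*y s)) (at s)" if s: "s \<in> {a<..<b}" for s
      using hy1[OF s] mw by simp
    obtain c1 c2 where cc: "\<forall>x\<in>{a<..<b}. y x = c1*exp(3/4*x)*cos(w*x) + c2*exp(3/4*x) * sin(w*x)"
      using ode_complex[OF ab wp hy hy1'] by blast
    show "\<exists>c1 c2. \<forall>t\<in>{a<..<b}.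
              c1 * exp (3/4 * t) * cos (sqrt (- D) / 2 * t) + c2 * exp (3/4 * t) * sin (sqrt (- D) / 2 * t) > 0 \<and>
              phi t = (c1 * exp (3/4 * t) * cos (sqrt (- D) / 2 * t)
                       + c2 * exp (3/4 * t) * sin (sqrt (- D) / 2 * t)) powr k"
      using cc ypos yk unfolding w_def by (intro exI[of _ c1] exI[of _ c2]) auto
  qed
  show ?thesis using A Bq C by blast
qed



lemma rev3a:
  fixes phi :: "real \<Rightarrow> real"
  assumes Z: "zeta p \<noteq> 0" and Ddef: "D = 9/4 - (Sb - 3) * (eta p + (zeta p)^2) / (zeta p)^2"
    and kdef: "k = 2 * zeta p / (eta p + (zeta p)^2)" and Dp: "D \<ge> 0"
    and H: "\<forall>t\<in>{a<..<b}.
              c1 * exp ((3/2 + sqrt D) / 2 * t) + c2 * exp ((3/2 - sqrt D) / 2 * t) > 0 \<and>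
              phi t = (c1 * exp ((3/2 + sqrt D) / 2 * t) + c2 * exp ((3/2 - sqrt D) / 2 * t)) powr k"
    and t: "t \<in> {a<..<b}"
  shows "scalarbar phi p t = Sb"
proof -
  define c where "c = (Sb - 3) * (eta p + (zeta p)^2) / (4 * (zeta p)^2)"
  have Dc: "D = 9/4 - 4 * c" using Z by (simp add: Ddef c_def field_simps power2_eq_square)
  define r1 where "r1 = (3/2 + sqrt D) / 2"
  define r2 where "r2 = (3/2 - sqrt D) / 2"
  have sq: "(sqrt D)^2 = D" using Dp by simp
  have q1: "r1^2 = 3/2 * r1 - c" using sq by (simp add: r1_def Dc field_simps power2_eq_square)
  have q2: "r2^2 = 3/2 * r2 - c" using sq by (simp add: r2_def Dc field_simps power2_eq_square)
  define y where "y = (\<lambda>x. c1 * exp (r1 * x) + c2 * exp (r2 * x))"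
  define y1 where "y1 = (\<lambda>x. c1 * r1 * exp (r1 * x) + c2 * r2 * exp (r2 * x))"
  define y2 where "y2 = (\<lambda>x. c1 * r1^2 * exp (r1 * x) + c2 * r2^2 * exp (r2 * x))"
  show ?thesis
  proof (rule rev3[where y=y and yd=y1 and ydd=y2 and c=c and k=k])
    show "\<forall>s\<in>{a<..<b}. y s > 0" using H by (simp add: y_def r1_def r2_def)
    show "\<forall>s\<in>{a<..<b}. (y has_real_derivative y1 s) (at s)"
      unfolding y_def y1_def by (auto intro!: derivative_eq_intros simp: algebra_simps)
    show "\<forall>s\<in>{a<..<b}. (y1 has_real_derivative y2 s) (at s)"
      unfolding y1_def y2_def by (auto intro!: derivative_eq_intros simp: algebra_simps power2_eq_square)
    show "\<forall>s\<in>{a<..<b}. y2 s = 3/2 * y1 s - c * y s"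
      unfolding y_def y1_def y2_def q1 q2 by (simp add: algebra_simps)
    show "\<forall>s\<in>{a<..<b}. phi s = y s powr k" using H by (simp add: y_def r1_def r2_def)
  qed (use Z kdef c_def t in auto)
qed

lemma rev3b:
  fixes phi :: "real \<Rightarrow> real"
  assumes Z: "zeta p \<noteq> 0" and Ddef: "D = 9/4 - (Sb - 3) * (eta p + (zeta p)^2) / (zeta p)^2"
    and kdef: "k = 2 * zeta p / (eta p + (zeta p)^2)" and D0: "D = 0"
    and H: "\<forall>t\<in>{a<..<b}.
              c1 * exp (3/4 * t) + c2 * t * exp (3/4 * t) > 0 \<and>
              phi t = (c1 * exp (3/4 * t) + c2 * t * exp (3/4 * t)) powr k"
    and t: "t \<in> {a<..<b}"
  shows "scalarbar phi p t = Sb"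
proof -
  define c where "c = (Sb - 3) * (eta p + (zeta p)^2) / (4 * (zeta p)^2)"
  have Dc: "D = 9/4 - 4 * c" using Z by (simp add: Ddef c_def field_simps power2_eq_square)
  have cv: "c = 9/16" using Dc D0 by simp
  define y where "y = (\<lambda>x. c1 * exp (3/4 * x) + c2 * x * exp (3/4 * x))"
  define y1 where "y1 = (\<lambda>x. c1 * (3/4) * exp (3/4 * x) + c2 * exp (3/4 * x) + c2 * x * (3/4) * exp (3/4 * x))"
  define y2 where "y2 = (\<lambda>x. c1 * (9/16) * exp (3/4 * x) + c2 * (3/2) * exp (3/4 * x) + c2 * x * (9/16) * exp (3/4 * x))"
  show ?thesis
  proof (rule rev3[where y=y and yd=y1 and ydd=y2 and c=c and k=k])
    show "\<forall>s\<in>{a<..<b}. y s > 0" using H by (simp add: y_def)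
    show "\<forall>s\<in>{a<..<b}. (y has_real_derivative y1 s) (at s)"
      unfolding y_def y1_def by (auto intro!: derivative_eq_intros simp: algebra_simps)
    show "\<forall>s\<in>{a<..<b}. (y1 has_real_derivative y2 s) (at s)"
      unfolding y1_def y2_def by (auto intro!: derivative_eq_intros simp: field_simps)
    show "\<forall>s\<in>{a<..<b}. y2 s = 3/2 * y1 s - c * y s"
      unfolding y_def y1_def y2_def cv by (simp add: algebra_simps)
    show "\<forall>s\<in>{a<..<b}. phi s = y s powr k" using H by (simp add: y_def)
  qed (use Z kdef c_def t in auto)
qed

lemma rev3c:
  fixes phi :: "real \<Rightarrow> real"
  assumes Z: "zeta p \<noteq> 0" and Ddef: "D = 9/4 - (Sb - 3) * (eta p + (zeta p)^2) / (zeta p)^2"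
    and kdef: "k = 2 * zeta p / (eta p + (zeta p)^2)" and Dn: "D < 0"
    and H: "\<forall>t\<in>{a<..<b}.
              c1 * exp (3/4 * t) * cos (sqrt (- D) / 2 * t) + c2 * exp (3/4 * t) * sin (sqrt (- D) / 2 * t) > 0 \<and>
              phi t = (c1 * exp (3/4 * t) * cos (sqrt (- D) / 2 * t)
                       + c2 * exp (3/4 * t) * sin (sqrt (- D) / 2 * t)) powr k"
    and t: "t \<in> {a<..<b}"
  shows "scalarbar phi p t = Sb"
proof -
  define c where "c = (Sb - 3) * (eta p + (zeta p)^2) / (4 * (zeta p)^2)"
  have Dc: "D = 9/4 - 4 * c" using Z by (simp add: Ddef c_def field_simps power2_eq_square)
  define w where "w = sqrt (- D) / 2"
  have sq: "(sqrt (-D))^2 = -D" using Dn by simp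
  have mw: "w^2 = c - 9/16" using sq by (simp add: w_def Dc field_simps power2_eq_square)
  define y where "y = (\<lambda>x. c1 * exp (3/4 * x) * cos (w * x) + c2 * exp (3/4 * x) * sin (w * x))"
  define y1 where "y1 = (\<lambda>x. exp (3/4 * x) * ((3/4 * c1 + w * c2) * cos (w * x) + (3/4 * c2 - w * c1) * sin (w * x)))"
  define y2 where "y2 = (\<lambda>x. exp (3/4 * x) * ((3/4 * (3/4 * c1 + w * c2) + w * (3/4 * c2 - w * c1)) * cos (w * x)
        + (3/4 * (3/4 * c2 - w * c1) - w * (3/4 * c1 + w * c2)) * sin (w * x)))"
  show ?thesis
  proof (rule rev3[where y=y and yd=y1 and ydd=y2 and c=c and k=k])
    show "\<forall>s\<in>{a<..<b}. y s > 0" using H by (simp add: y_def w_def)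
    show "\<forall>s\<in>{a<..<b}. (y has_real_derivative y1 s) (at s)"
      unfolding y_def y1_def by (auto intro!: derivative_eq_intros simp: algebra_simps)
    show "\<forall>s\<in>{a<..<b}. (y1 has_real_derivative y2 s) (at s)"
      unfolding y1_def y2_def by (auto intro!: derivative_eq_intros simp: field_simps)
    have c': "c = w^2 + 9/16" using mw by simp
    show "\<forall>s\<in>{a<..<b}. y2 s = 3/2 * y1 s - c * y s"
      unfolding y_def y1_def y2_def c' by (simp add: algebra_simps power2_eq_square)
    show "\<forall>s\<in>{a<..<b}. phi s = y s powr k" using H by (simp add: y_def w_def)
  qed (use Z kdef c_def t in auto)
qed



lemma smooth_d:
  assumes "smooth_on S phi" "t \<in> S"
  shows "(phi has_real_derivative deriv phi t) (at t)"
    "(deriv phi has_real_derivative deriv (deriv phi) t) (at t)"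
proof -
  have "(deriv ^^ 0) phi differentiable at t" using assms unfolding smooth_on_def by blast
  then show "(phi has_real_derivative deriv phi t) (at t)"
    by (simp add: DERIV_deriv_iff_real_differentiable)
  have "(deriv ^^ 1) phi differentiable at t" using assms unfolding smooth_on_def by blast
  then show "(deriv phi has_real_derivative deriv (deriv phi) t) (at t)"
    by (simp add: DERIV_deriv_iff_real_differentiable)
qed

theorem theorem5p6:
  fixes phi :: "real \<Rightarrow> real" and p :: "nat \<Rightarrow> real" and t1 t2 Sb :: real
  assumes "t1 < t2"
    and "\<forall>t\<in>{t1<..<t2}. phi t > 0"
    and "smooth_on {t1<..<t2} phi"
  shows "(\<forall>t\<in>{t1<..<t2}. scalarbar phi p t = Sb) \<longleftrightarrow>
    ((zeta p = 0 \<and> eta p = 0 \<and> Sb = 3)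
     \<or> (zeta p = 0 \<and> eta p \<noteq> 0 \<and> \<not> (Sb > 3)
         \<and> (Sb = 3 \<longrightarrow> (\<exists>c. \<forall>t\<in>{t1<..<t2}. phi t = c))
         \<and> (Sb < 3 \<longrightarrow> (\<exists>c0>0. \<exists>\<sigma>\<in>{-1, 1::real}.
               \<forall>t\<in>{t1<..<t2}. phi t = c0 * exp (\<sigma> * sqrt (- (Sb - 3) / eta p) * t))))
     \<or> (zeta p \<noteq> 0 \<and>
         (let D = 9/4 - (Sb - 3) * (eta p + (zeta p)^2) / (zeta p)^2;
              k = 2 * zeta p / (eta p + (zeta p)^2);
              B = 9 * (zeta p)^2 / (4 * (eta p + (zeta p)^2)) + 3 in
          (Sb < B \<longrightarrow> (\<exists>c1 c2. \<forall>t\<in>{t1<..<t2}.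
              c1 * exp ((3/2 + sqrt D) / 2 * t) + c2 * exp ((3/2 - sqrt D) / 2 * t) > 0 \<and>
              phi t = (c1 * exp ((3/2 + sqrt D) / 2 * t) + c2 * exp ((3/2 - sqrt D) / 2 * t)) powr k))
        \<and> (Sb = B \<longrightarrow> (\<exists>c1 c2. \<forall>t\<in>{t1<..<t2}.
              c1 * exp (3/4 * t) + c2 * t * exp (3/4 * t) > 0 \<and>
              phi t = (c1 * exp (3/4 * t) + c2 * t * exp (3/4 * t)) powr k))
        \<and> (Sb > B \<longrightarrow> (\<exists>c1 c2. \<forall>t\<in>{t1<..<t2}.
              c1 * exp (3/4 * t) * cos (sqrt (- D) / 2 * t) + c2 * exp (3/4 * t) * sin (sqrt (- D) / 2 * t) > 0 \<and>
              phi t = (c1 * exp (3/4 * t) * cos (sqrt (- D) / 2 * t)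
                       + c2 * exp (3/4 * t) * sin (sqrt (- D) / 2 * t)) powr k)))))"
  (is "?L \<longleftrightarrow> ?R1 \<or> ?R2 \<or> ?R3")
proof -
  note ab = assms(1) and pos = assms(2) and sm = assms(3)
  define Z where "Z = zeta p"
  define E where "E = eta p"
  have d1: "\<forall>t\<in>{t1<..<t2}. (phi has_real_derivative deriv phi t) (at t)"
    using smooth_d(1)[OF sm] by blast
  have d2: "\<forall>t\<in>{t1<..<t2}. (deriv phi has_real_derivative deriv (deriv phi) t) (at t)"
    using smooth_d(2)[OF sm] by blast
  have SF: "scalarbar phi p t = 3 + 3 * Z * (deriv phi t / phi t) - 2 * Z * (deriv (deriv phi) t / phi t)
     - (E + Z^2 - 2 * Z) * (deriv phi t / phi t)^2" if t: "t \<in> {t1<..<t2}" for t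
    unfolding Z_def E_def
    by (rule scalar_formula[where S="{t1<..<t2}"]) (use t pos d1 d2 in auto)
  define x0 where "x0 = (t1+t2)/2"
  have x0: "x0 \<in> {t1<..<t2}" using ab by (auto simp: x0_def)
  have Enn: "E \<ge> 0" by (simp add: E_def eta_nonneg)
  show ?thesis
  proof
    assume L: ?L
    have rel: "\<forall>t\<in>{t1<..<t2}. 3 + 3 * Z * (deriv phi t / phi t) - 2 * Z * (deriv (deriv phi) t / phi t)
       - (E + Z^2 - 2 * Z) * (deriv phi t / phi t)^2 = Sb"
      using L SF by auto
    show "?R1 \<or> ?R2 \<or> ?R3"
    proof (cases "Z = 0")
      case Z0: True
      have rel0: "3 - E * (deriv phi t / phi t)^2 = Sb" if "t \<in> {t1<..<t2}" for t
        using rel that Z0 by auto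
      show ?thesis
      proof (cases "E = 0")
        case True
        then have "Sb = 3" using rel0[OF x0] by simp
        then show ?thesis using True Z0 by (simp add: Z_def E_def)
      next
        case False
        then have Ep: "E > 0" using Enn by simp
        have n3: "\<not> Sb > 3"
        proof
          assume "Sb > 3"
          moreover have "E * (deriv phi x0 / phi x0)^2 \<ge> 0" using Ep by simp
          ultimately show False using rel0[OF x0] by simp
        qed
        have c3: "Sb = 3 \<longrightarrow> (\<exists>c. \<forall>t\<in>{t1<..<t2}. phi t = c)"
        proof
          assume S3: "Sb = 3"
          have dz: "deriv phi t = 0" if t: "t \<in> {t1<..<t2}" for t
          proof -
            have "E * (deriv phi t / phi t)^2 = 0" using rel0[OF t] S3 by simp
            then have "deriv phi t / phi t = 0" using Ep by simp
            moreover have "phi t > 0" using pos t by blast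
            ultimately show ?thesis by simp
          qed
          have "phi t = phi x0" if t: "t \<in> {t1<..<t2}" for t
            by (rule const_deriv0[OF ab _ t x0]) (use d1 dz in auto)
          then show "\<exists>c. \<forall>t\<in>{t1<..<t2}. phi t = c" by blast
        qed
        have cl: "Sb < 3 \<longrightarrow> (\<exists>c0>0. \<exists>\<sigma>\<in>{-1, 1::real}.
               \<forall>t\<in>{t1<..<t2}. phi t = c0 * exp (\<sigma> * sqrt (- (Sb - 3) / eta p) * t))"
        proof
          assume Sl: "Sb < 3"
          define s where "s = sqrt (- (Sb - 3) / E)"
          have sp: "s > 0" using Sl Ep by (simp add: s_def)
          have s2: "s^2 = - (Sb - 3) / E" using Sl Ep by (simp add: s_def)
          have sq: "\<forall>t\<in>{t1<..<t2}. (deriv phi t / phi t)^2 = s^2"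
          proof
            fix t assume t: "t \<in> {t1<..<t2}"
            show "(deriv phi t / phi t)^2 = s^2" using rel0[OF t] Ep unfolding s2 by (simp add: field_simps)
          qed
          show "\<exists>c0>0. \<exists>\<sigma>\<in>{-1, 1::real}.
               \<forall>t\<in>{t1<..<t2}. phi t = c0 * exp (\<sigma> * sqrt (- (Sb - 3) / eta p) * t)"
            using exp_sol[OF ab pos d1 d2 sq sp] unfolding s_def E_def .
        qed
        show ?thesis using Z0 False n3 c3 cl by (simp add: Z_def E_def)
      qed
    next
      case False
      have K: "E + Z^2 > 0" using False Enn by (simp add: add_nonneg_pos)
      have "(Sb < 9 * Z^2 / (4 * (E + Z^2)) + 3 \<longrightarrow> (\<exists>c1 c2. \<forall>t\<in>{t1<..<t2}.
              c1 * exp ((3/2 + sqrt (9/4 - (Sb - 3) * (E + Z^2) / Z^2)) / 2 * t) + c2 * exp ((3/2 - sqrt (9/4 - (Sb - 3) * (E + Z^2) / Z^2)) / 2 * t) > 0 \<and>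
              phi t = (c1 * exp ((3/2 + sqrt (9/4 - (Sb - 3) * (E + Z^2) / Z^2)) / 2 * t) + c2 * exp ((3/2 - sqrt (9/4 - (Sb - 3) * (E + Z^2) / Z^2)) / 2 * t)) powr (2 * Z / (E + Z^2))))
        \<and> (Sb = 9 * Z^2 / (4 * (E + Z^2)) + 3 \<longrightarrow> (\<exists>c1 c2. \<forall>t\<in>{t1<..<t2}.
              c1 * exp (3/4 * t) + c2 * t * exp (3/4 * t) > 0 \<and>
              phi t = (c1 * exp (3/4 * t) + c2 * t * exp (3/4 * t)) powr (2 * Z / (E + Z^2))))
        \<and> (Sb > 9 * Z^2 / (4 * (E + Z^2)) + 3 \<longrightarrow> (\<exists>c1 c2. \<forall>t\<in>{t1<..<t2}.
              c1 * exp (3/4 * t) * cos (sqrt (- (9/4 - (Sb - 3) * (E + Z^2) / Z^2)) / 2 * t) + c2 * exp (3/4 * t) * sin (sqrt (- (9/4 - (Sb - 3) * (E + Z^2) / Z^2)) / 2 * t) > 0 \<and>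
              phi t = (c1 * exp (3/4 * t) * cos (sqrt (- (9/4 - (Sb - 3) * (E + Z^2) / Z^2)) / 2 * t)
                       + c2 * exp (3/4 * t) * sin (sqrt (- (9/4 - (Sb - 3) * (E + Z^2) / Z^2)) / 2 * t)) powr (2 * Z / (E + Z^2))))"
        by (rule fwd3[OF ab pos d1 d2 rel False K refl refl refl])
      then have "?R3" using False unfolding Let_def Z_def E_def by blast
      then show ?thesis by blast
    qed
  next
    assume R: "?R1 \<or> ?R2 \<or> ?R3"
    show ?L
    proof
      fix t assume t: "t \<in> {t1<..<t2}"
      have pt: "phi t > 0" using pos t by blast
      from R consider (r1) ?R1 | (r2) ?R2 | (r3) ?R3 by blast
      then show "scalarbar phi p t = Sb"
      proof cases
        case r1
        then show ?thesis using SF[OF t] by (simp add: Z_def E_def)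
      next
        case r2
        then have Z0: "Z = 0" and E0: "E \<noteq> 0" and n3: "\<not> Sb > 3" by (auto simp: Z_def E_def)
        have Ep: "E > 0" using E0 Enn by simp
        show ?thesis
        proof (cases "Sb = 3")
          case True
          then obtain c where c: "\<forall>t\<in>{t1<..<t2}. phi t = c" using r2 by blast
          have "((\<lambda>x. c) has_real_derivative 0) (at t)" by simp
          then have "(phi has_real_derivative 0) (at t)"
            by (rule has_field_derivative_transform_within_open[of _ _ _ "{t1<..<t2}"]) (use t c in auto)
          then have "deriv phi t = 0" using d1 t DERIV_unique by blast
          then show ?thesis using SF[OF t] Z0 True by simp
        next
          case False
          then have Sl: "Sb < 3" using n3 by simp
          then obtain c0 \<sigma> where sg: "\<sigma> \<in> {-1,1}"
            and c: "\<forall>t\<in>{t1<..<t2}. phi t = c0 * exp (\<sigma> * sqrt (- (Sb - 3) / eta p) * t)"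
            using r2 by blast
          define s where "s = sqrt (- (Sb - 3) / E)"
          have s2: "s^2 = - (Sb - 3) / E" using Sl Ep by (simp add: s_def)
          have "((\<lambda>x. c0 * exp (\<sigma> * s * x)) has_real_derivative c0 * (exp (\<sigma> * s * t) * (\<sigma> * s))) (at t)"
            by (auto intro!: derivative_eq_intros)
          then have "(phi has_real_derivative c0 * (exp (\<sigma> * s * t) * (\<sigma> * s))) (at t)"
            by (rule has_field_derivative_transform_within_open[of _ _ _ "{t1<..<t2}"])
               (use t c in \<open>auto simp: s_def E_def\<close>)
          then have "deriv phi t = c0 * (exp (\<sigma> * s * t) * (\<sigma> * s))" using d1 t DERIV_unique by blast
          moreover have "phi t = c0 * exp (\<sigma> * s * t)" using c t by (simp add: s_def E_def)
          ultimately have "deriv phi t / phi t = \<sigma> * s" using pt by (auto simp: field_simps)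
          moreover have "\<sigma>^2 = 1" using sg by auto
          ultimately have "(deriv phi t / phi t)^2 = - (Sb - 3) / E" by (simp add: power_mult_distrib s2)
          then show ?thesis using SF[OF t] Z0 Ep by (simp add: field_simps)
        qed
      next
        case r3
        then have Zn: "zeta p \<noteq> 0" by simp
        define D where "D = 9/4 - (Sb - 3) * (eta p + (zeta p)^2) / (zeta p)^2"
        define k where "k = 2 * zeta p / (eta p + (zeta p)^2)"
        define B where "B = 9 * (zeta p)^2 / (4 * (eta p + (zeta p)^2)) + 3"
        have K: "eta p + (zeta p)^2 > 0" by (rule K_pos[OF Zn])
        have signs: "(Sb < B \<longleftrightarrow> D > 0)" "(Sb = B \<longleftrightarrow> D = 0)" "(Sb > B \<longleftrightarrow> D < 0)"
          using DB_signs[OF Zn K D_def B_def] by auto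
        have R3': "(Sb < B \<longrightarrow> (\<exists>c1 c2. \<forall>t\<in>{t1<..<t2}.
              c1 * exp ((3/2 + sqrt D) / 2 * t) + c2 * exp ((3/2 - sqrt D) / 2 * t) > 0 \<and>
              phi t = (c1 * exp ((3/2 + sqrt D) / 2 * t) + c2 * exp ((3/2 - sqrt D) / 2 * t)) powr k))
        \<and> (Sb = B \<longrightarrow> (\<exists>c1 c2. \<forall>t\<in>{t1<..<t2}.
              c1 * exp (3/4 * t) + c2 * t * exp (3/4 * t) > 0 \<and>
              phi t = (c1 * exp (3/4 * t) + c2 * t * exp (3/4 * t)) powr k))
        \<and> (Sb > B \<longrightarrow> (\<exists>c1 c2. \<forall>t\<in>{t1<..<t2}.
              c1 * exp (3/4 * t) * cos (sqrt (- D) / 2 * t) + c2 * exp (3/4 * t) * sin (sqrt (- D) / 2 * t) > 0 \<and>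
              phi t = (c1 * exp (3/4 * t) * cos (sqrt (- D) / 2 * t)
                       + c2 * exp (3/4 * t) * sin (sqrt (- D) / 2 * t)) powr k))"
          using r3 unfolding Let_def D_def k_def B_def by blast
        consider "Sb < B" | "Sb = B" | "Sb > B" by linarith
        then show ?thesis
        proof cases
          case 1
          then obtain c1 c2 where H: "\<forall>t\<in>{t1<..<t2}.
              c1 * exp ((3/2 + sqrt D) / 2 * t) + c2 * exp ((3/2 - sqrt D) / 2 * t) > 0 \<and>
              phi t = (c1 * exp ((3/2 + sqrt D) / 2 * t) + c2 * exp ((3/2 - sqrt D) / 2 * t)) powr k"
            using R3' by blast
          show ?thesis by (rule rev3a[OF Zn D_def k_def _ H t]) (use 1 signs in auto)
        next
          case 2
          then obtain c1 c2 where H: "\<forall>t\<in>{t1<..<t2}.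
              c1 * exp (3/4 * t) + c2 * t * exp (3/4 * t) > 0 \<and>
              phi t = (c1 * exp (3/4 * t) + c2 * t * exp (3/4 * t)) powr k"
            using R3' by blast
          show ?thesis by (rule rev3b[OF Zn D_def k_def _ H t]) (use 2 signs in auto)
        next
          case 3
          then obtain c1 c2 where H: "\<forall>t\<in>{t1<..<t2}.
              c1 * exp (3/4 * t) * cos (sqrt (- D) / 2 * t) + c2 * exp (3/4 * t) * sin (sqrt (- D) / 2 * t) > 0 \<and>
              phi t = (c1 * exp (3/4 * t) * cos (sqrt (- D) / 2 * t)
                       + c2 * exp (3/4 * t) * sin (sqrt (- D) / 2 * t)) powr k"
            using R3' by blast
          show ?thesis by (rule rev3c[OF Zn D_def k_def _ H t]) (use 3 signs in auto)
        qed
      qed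
    qed
  qed
qed


end
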